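(* Let $x=(x_n)_{n\in\mathbb{Z}}$ be an integer-valued sequence. For every $i\in\mathbb{Z}$, the set of descendants of $i$ in the record graph of $x$ is $$D(i)=\{j\in\mathbb{Z}: L_x(i)\le j\le i\},$$ where, if $L_x(i)=-\infty$, this is $\{j\in\mathbb{Z}:j\le i\}$.
   Context: Write $y(j,k)=\sum_{l=j}^{k-1}x_l$ for $j<k$. The record map is $R_x(i)=\inf\{n>i: y(i,n)\ge0\}$ if this set is nonempty, and $R_x(i)=i$ otherwise; the record graph has vertex set $\mathbb{Z}$ and directed edges $i\to R_x(i)$ for $R_x(i)\neq i$. $D(i)=\{i\}\cup\{j\ne i: R_x^n(j)=i\text{ for some }n\ge1\}$. Define $L_x(i)=\inf\{j<i: y(k,i)\ge0\text{ for all }j\le k<i\}\in\mathbb{Z}\cup\{-\infty\}$ if this set is nonempty, and $L_x(i)=i$ otherwise. *)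

theory Defs
  imports Main "HOL-Library.Extended_Real"
begin

definition ysum :: "(int \<Rightarrow> int) \<Rightarrow> int \<Rightarrow> int \<Rightarrow> int" where
  "ysum x j k = (\<Sum>l\<in>{j..<k}. x l)"

definition record_map :: "(int \<Rightarrow> int) \<Rightarrow> int \<Rightarrow> int" where
  "record_map x i = (if {n. n > i \<and> ysum x i n \<ge> 0} \<noteq> {}
     then (LEAST n. n > i \<and> ysum x i n \<ge> 0) else i)"

definition descendants :: "(int \<Rightarrow> int) \<Rightarrow> int \<Rightarrow> int set" where
  "descendants x i = {i} \<union> {j. j \<noteq> i \<and> (\<exists>n::nat. n \<ge> 1 \<and> (record_map x ^^ n) j = i)}"

definition Lx :: "(int \<Rightarrow> int) \<Rightarrow> int \<Rightarrow> ereal" where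
  "Lx x i = (let S = {j. j < i \<and> (\<forall>k. j \<le> k \<and> k < i \<longrightarrow> ysum x k i \<ge> 0)}
     in if S = {} then ereal (of_int i) else Inf ((\<lambda>j. ereal (of_int j)) ` S))"

end

theory Submission
  imports Defs
begin

lemma ysum_split:
  assumes "a \<le> b" "b \<le> c"
  shows "ysum x a c = ysum x a b + ysum x b c"
proof -
  have "{a..<c} = {a..<b} \<union> {b..<c}" using assms by auto
  then show ?thesis unfolding ysum_def
    by (simp add: sum.union_disjoint ivl_disj_int_two(3))
qed

definition PP :: "(int \<Rightarrow> int) \<Rightarrow> int \<Rightarrow> int \<Rightarrow> bool" where
  "PP x a b = (a < b \<and> (\<forall>k. a \<le> k \<and> k < b \<longrightarrow> ysum x k b \<ge> 0))"

lemma PP_trans: "PP x a b \<Longrightarrow> PP x b c \<Longrightarrow> PP x a c"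
  unfolding PP_def
proof (intro conjI allI impI)
  assume h: "a < b \<and> (\<forall>k. a \<le> k \<and> k < b \<longrightarrow> 0 \<le> ysum x k b)"
    "b < c \<and> (\<forall>k. b \<le> k \<and> k < c \<longrightarrow> 0 \<le> ysum x k c)"
  then show "a < c" by auto
  fix k assume k: "a \<le> k \<and> k < c"
  show "0 \<le> ysum x k c"
  proof (cases "k < b")
    case True
    then have "ysum x k c = ysum x k b + ysum x b c" using h by (intro ysum_split) auto
    moreover have "ysum x b c \<ge> 0" using h by (cases "b < c") auto
    ultimately show ?thesis using h k True by auto
  next
    case False then show ?thesis using h k by auto
  qed
qed

lemma PP_up: "PP x a c \<Longrightarrow> a \<le> b \<Longrightarrow> b < c \<Longrightarrow> PP x b c"
  unfolding PP_def by auto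

lemma rec_prop:
  assumes "\<exists>n>j. ysum x j n \<ge> 0"
  shows "record_map x j > j \<and> ysum x j (record_map x j) \<ge> 0 \<and>
         (\<forall>n. j < n \<and> n < record_map x j \<longrightarrow> ysum x j n < 0)"
proof -
  obtain n0 where n0: "n0 > j" "ysum x j n0 \<ge> 0" using assms by auto
  define Q where "Q k = (ysum x j (j+1+int k) \<ge> 0)" for k :: nat
  have "Q (nat (n0 - j - 1))" unfolding Q_def using n0 by simp
  then have Qk: "Q (LEAST k. Q k)" by (rule LeastI)
  define m where "m = j + 1 + int (LEAST k. Q k)"
  have mmin: "\<forall>n. j < n \<and> n < m \<longrightarrow> ysum x j n < 0"
  proof (intro allI impI)
    fix n assume h: "j < n \<and> n < m"
    have "\<not> Q (nat (n - j - 1))"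
    proof
      assume "Q (nat (n - j - 1))"
      then have "(LEAST k. Q k) \<le> nat (n - j - 1)" by (rule Least_le)
      then show False using h unfolding m_def by linarith
    qed
    then show "ysum x j n < 0" unfolding Q_def using h by simp
  qed
  have mQ: "m > j \<and> ysum x j m \<ge> 0" using Qk unfolding Q_def m_def by simp
  have "(LEAST n. n > j \<and> ysum x j n \<ge> 0) = m"
    by (rule Least_equality) (use mQ mmin in \<open>force+\<close>)
  moreover have "{n. n > j \<and> ysum x j n \<ge> 0} \<noteq> {}" using n0 by auto
  ultimately have "record_map x j = m" unfolding record_map_def by simp
  then show ?thesis using mQ mmin by simp
qed

lemma rec_step: "record_map x j = j \<or> PP x j (record_map x j)"
proof (cases "\<exists>n>j. ysum x j n \<ge> 0")
  case False
  then have "{n. n > j \<and> ysum x j n \<ge> 0} = {}" by auto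
  then show ?thesis unfolding record_map_def by simp
next
  case True
  note r = rec_prop[OF True]
  define m where "m = record_map x j"
  have "PP x j m" unfolding PP_def
  proof (intro conjI allI impI)
    show "j < m" using r m_def by simp
    fix k assume k: "j \<le> k \<and> k < m"
    show "0 \<le> ysum x k m"
    proof (cases "k = j")
      case True then show ?thesis using r m_def by simp
    next
      case False
      have "ysum x j m = ysum x j k + ysum x k m" using k by (intro ysum_split) auto
      moreover have "ysum x j k < 0" using r k False m_def by auto
      ultimately show ?thesis using r m_def by simp
    qed
  qed
  then show ?thesis using m_def by simp
qed

lemma iter_PP: "(record_map x ^^ n) j = j \<or> PP x j ((record_map x ^^ n) j)"
proof (induction n)
  case 0 then show ?case by simp
next
  case (Suc n)
  define m where "m = (record_map x ^^ n) j"
  have eq: "(record_map x ^^ Suc n) j = record_map x m" by (simp add: m_def)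
  from Suc m_def have "m = j \<or> PP x j m" by simp
  then show ?case
  proof
    assume "m = j" then show ?thesis using rec_step[of x j] eq by simp
  next
    assume h: "PP x j m"
    from rec_step[of x m] show ?thesis
      using eq h PP_trans by metis
  qed
qed

lemma PP_desc: "PP x j i \<Longrightarrow> \<exists>n::nat. n \<ge> 1 \<and> (record_map x ^^ n) j = i"
proof (induction "nat (i - j)" arbitrary: j rule: less_induct)
  case less
  have ex: "\<exists>n>j. ysum x j n \<ge> 0" using less.prems unfolding PP_def by auto
  note r = rec_prop[OF ex]
  define m where "m = record_map x j"
  have mi: "m \<le> i"
  proof (rule ccontr)
    assume "\<not> m \<le> i"
    then have "ysum x j i < 0" using r m_def less.prems unfolding PP_def by auto
    then show False using less.prems unfolding PP_def by auto
  qed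
  show ?case
  proof (cases "m = i")
    case True
    then show ?thesis by (intro exI[of _ 1]) (simp add: m_def)
  next
    case False
    then have "PP x m i" using PP_up[OF less.prems, of m] mi r m_def by simp
    moreover have "nat (i - m) < nat (i - j)" using r m_def False mi by simp
    ultimately obtain n where n: "n \<ge> 1" "(record_map x ^^ n) m = i"
      using less.hyps by blast
    have "(record_map x ^^ (n + 1)) j = i" using n m_def by (simp del: funpow.simps add: funpow_Suc_right)
    then show ?thesis by (intro exI[of _ "n+1"]) simp
  qed
qed

lemma desc_char: "descendants x i = {i} \<union> {j. PP x j i}"
proof -
  have "\<And>j. j \<noteq> i \<Longrightarrow> (\<exists>n::nat. n \<ge> 1 \<and> (record_map x ^^ n) j = i) \<longleftrightarrow> PP x j i"
  proof
    fix j assume "j \<noteq> i" "\<exists>n::nat. n \<ge> 1 \<and> (record_map x ^^ n) j = i"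
    then show "PP x j i" using iter_PP[where x=x and j=j] by metis
  next
    fix j assume "PP x j i" then show "\<exists>n::nat. n \<ge> 1 \<and> (record_map x ^^ n) j = i"
      by (rule PP_desc)
  qed
  moreover have "\<not> PP x i i" unfolding PP_def by simp
  ultimately show ?thesis unfolding descendants_def by auto
qed

theorem lemma2p16:
  fixes x :: "int \<Rightarrow> int" and i :: int
  shows "descendants x i = {j. Lx x i \<le> ereal (of_int j) \<and> j \<le> i}"
proof -
  define S where "S = {j. j < i \<and> (\<forall>k. j \<le> k \<and> k < i \<longrightarrow> ysum x k i \<ge> 0)}"
  have SP: "S = {j. PP x j i}" unfolding S_def PP_def by auto
  have L: "Lx x i = (if S = {} then ereal (of_int i) else Inf ((\<lambda>j. ereal (of_int j)) ` S))"
    unfolding Lx_def S_def Let_def by simp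
  show ?thesis
  proof (cases "S = {}")
    case True
    then show ?thesis unfolding desc_char SP[symmetric] L by auto
  next
    case False
    have "{j. Lx x i \<le> ereal (of_int j) \<and> j \<le> i} = {i} \<union> S"
    proof (intro set_eqI iffI)
      fix j assume h: "j \<in> {j. Lx x i \<le> ereal (of_int j) \<and> j \<le> i}"
      show "j \<in> {i} \<union> S"
      proof (rule ccontr)
        assume nj: "j \<notin> {i} \<union> S"
        have "\<forall>s\<in>S. j + 1 \<le> s"
        proof
          fix s assume s: "s \<in> S"
          show "j + 1 \<le> s"
          proof (rule ccontr)
            assume "\<not> j + 1 \<le> s"
            then have "PP x j i" using s SP h nj PP_up[of x s i j] by (auto simp: PP_def)
            then show False using nj SP by auto
          qed
        qed
        then have "ereal (of_int (j+1)) \<le> Inf ((\<lambda>j. ereal (of_int j)) ` S)"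
          by (auto intro!: Inf_greatest)
        moreover have "Inf ((\<lambda>j. ereal (of_int j)) ` S) \<le> ereal (of_int j)"
        proof -
          have "Lx x i \<le> ereal (of_int j)" using h by blast
          moreover have "Lx x i = Inf ((\<lambda>j. ereal (of_int j)) ` S)" using L False by (simp only: if_False)
          ultimately show ?thesis by (simp only:)
        qed
        ultimately have "ereal (of_int (j+1)) \<le> ereal (of_int j)"
          by (rule order_trans)
        then show False by simp
      qed
    next
      fix j assume "j \<in> {i} \<union> S"
      moreover have "s \<in> S \<Longrightarrow> Inf ((\<lambda>j. ereal (of_int j)) ` S) \<le> ereal (of_int s)" for s
        by (rule Inf_lower) simp
      moreover have "Inf ((\<lambda>j. ereal (of_int j)) ` S) \<le> ereal (of_int i)"
      proof -
        obtain s where s: "s \<in> S" using False by blast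
        then have "s < i" unfolding S_def by simp
        then have "ereal (of_int s) \<le> ereal (of_int i)" by simp
        moreover have "Inf ((\<lambda>j. ereal (of_int j)) ` S) \<le> ereal (of_int s)"
          using s by (intro Inf_lower) simp
        ultimately show ?thesis by (rule order_trans[rotated])
      qed
      ultimately show "j \<in> {j. Lx x i \<le> ereal (of_int j) \<and> j \<le> i}"
        using L False S_def by auto
    qed
    then show ?thesis unfolding desc_char SP[symmetric] by simp
  qed
qed

end
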